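(* Let $k\in\mathbb{N}$. (a) Let $P\in\mathbb{C}[x]$. There exists $Q\in\mathbb{C}[x]$ such that $P,Q$ satisfy (i)–(iii) below if and only if $\deg P\le k$, $P$ has parity $(k\bmod 2)$, and (iv.a) $|P(x)|\le 1$ for all $x\in[-1,1]$; (iv.b) $|P(x)|\ge 1$ for all $x\in(-\infty,-1]\cup[1,\infty)$; (iv.c) if $k$ is even, then $P(ix)P^*(ix)\ge 1$ for all $x\in\mathbb{R}$. (b) Let $Q\in\mathbb{C}[x]$. There exists $P\in\mathbb{C}[x]$ such that $P,Q$ satisfy (i)–(iii) if and only if $\deg Q\le k-1$, $Q$ has parity $(k-1\bmod 2)$, and (v.a) $\sqrt{1-x^2}\,|Q(x)|\le 1$ for all $x\in[-1,1]$; (v.b) if $k$ is odd, then $(1+x^2)Q(ix)Q^*(ix)\ge 1$ for all $x\in\mathbb{R}$. Here the conditions are: (i) $\deg P\le k$, $\deg Q\le k-1$; (ii) $P$ has parity $(k\bmod 2)$ and $Q$ has parity $(k-1\bmod 2)$; (iii) $|P(x)|^2+(1-x^2)|Q(x)|^2=1$ for all $x\in[-1,1]$.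
   Context: For $P(x)=\sum_j a_jx^j\in\mathbb{C}[x]$, $P^*(x):=\sum_j \overline{a_j}x^j$. A polynomial is even (odd) if all its odd-power (even-power) coefficients vanish; the zero polynomial is both. $P$ has parity $z\in\mathbb{Z}$ if $z$ is even and $P$ is even, or $z$ is odd and $P$ is odd. *)

theory Defs
  imports "HOL-Computational_Algebra.Polynomial" Complex_Main
begin

definition pstar :: "complex poly \<Rightarrow> complex poly" where
  "pstar P = map_poly cnj P"

definition even_poly :: "complex poly \<Rightarrow> bool" where
  "even_poly P \<longleftrightarrow> (\<forall>j. odd j \<longrightarrow> coeff P j = 0)"

definition odd_poly :: "complex poly \<Rightarrow> bool" where
  "odd_poly P \<longleftrightarrow> (\<forall>j. even j \<longrightarrow> coeff P j = 0)"

definition has_parity :: "complex poly \<Rightarrow> int \<Rightarrow> bool" where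
  "has_parity P z \<longleftrightarrow> (even z \<and> even_poly P) \<or> (odd z \<and> odd_poly P)"

text \<open>deg P \<le> d with the convention deg 0 = -infinity.\<close>
definition deg_le :: "complex poly \<Rightarrow> int \<Rightarrow> bool" where
  "deg_le P d \<longleftrightarrow> P = 0 \<or> int (degree P) \<le> d"

definition qsp_conds :: "nat \<Rightarrow> complex poly \<Rightarrow> complex poly \<Rightarrow> bool" where
  "qsp_conds k P Q \<longleftrightarrow>
     deg_le P (int k) \<and> deg_le Q (int k - 1) \<and>
     has_parity P (int k mod 2) \<and> has_parity Q ((int k - 1) mod 2) \<and>
     (\<forall>x::real. -1 \<le> x \<and> x \<le> 1 \<longrightarrow>
        (cmod (poly P (of_real x)))^2 + (1 - x^2) * (cmod (poly Q (of_real x)))^2 = 1)"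

end

theory Submission imports Defs "HOL-Computational_Algebra.Fundamental_Theorem_Algebra"
begin

lemma pstar_poly [simp]: "poly (pstar p) z = cnj (poly p (cnj z))"
  by (simp add: pstar_def)

lemma poly_eqI_all: "(\<And>z. poly p z = poly q z) \<Longrightarrow> p = q"
  for p q :: "complex poly"
  using poly_eq_poly_eq_iff by blast

lemma pstar_mult [simp]: "pstar (p * q) = pstar p * pstar q"
  by (rule poly_eqI_all) simp

lemma pstar_add [simp]: "pstar (p + q) = pstar p + pstar q"
  by (rule poly_eqI_all) simp

lemma pstar_diff [simp]: "pstar (p - q) = pstar p - pstar q"
  by (rule poly_eqI_all) simp

lemma pstar_const [simp]: "pstar [:c:] = [:cnj c:]"
  by (rule poly_eqI_all) simp

lemma pstar_1 [simp]: "pstar 1 = 1"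
  by (rule poly_eqI_all) simp

lemma pstar_0 [simp]: "pstar 0 = 0"
  by (rule poly_eqI_all) simp

lemma pstar_X [simp]: "pstar [:0,1:] = [:0,1:]"
  by (rule poly_eqI_all) simp

lemma pstar_lin: "pstar [:a,1:] = [:cnj a,1:]"
  by (rule poly_eqI_all) simp

lemma pstar_pstar [simp]: "pstar (pstar p) = p"
  by (rule poly_eqI_all) simp

lemma pstar_pcompose_x2: "pstar (pcompose R [:0,0,1:]) = pcompose (pstar R) [:0,0,1:]"
  by (rule poly_eqI_all) (simp add: poly_pcompose)

lemma degree_pstar [simp]: "degree (pstar p) = degree p"
  unfolding pstar_def by (rule degree_map_poly) simp

lemma pstar_eq_0_iff [simp]: "pstar p = 0 \<longleftrightarrow> p = 0"
  by (metis pstar_0 pstar_pstar)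

lemma poly_eq_on_infinite:
  fixes p q :: "complex poly"
  assumes "infinite S" "\<And>z. z \<in> S \<Longrightarrow> poly p z = poly q z"
  shows "p = q"
proof (rule ccontr)
  assume "p \<noteq> q"
  then have "p - q \<noteq> 0" by simp
  then have "finite {z. poly (p - q) z = 0}" by (rule poly_roots_finite)
  moreover have "S \<subseteq> {z. poly (p - q) z = 0}" using assms(2) by auto
  ultimately show False using assms(1) finite_subset by blast
qed

lemma infinite_real_image: "infinite (complex_of_real ` {a..b})" if "a < b" for a b :: real
proof -
  have "inj_on complex_of_real {a..b}" by (simp add: inj_on_def)
  moreover have "infinite {a..b}" using that by simp
  ultimately show ?thesis using finite_imageD by blast
qed

lemma poly_eq_on_reals:
  fixes p q :: "complex poly"
  assumes "\<And>y::real. -1 \<le> y \<Longrightarrow> y \<le> 1 \<Longrightarrow> poly p (of_real y) = poly q (of_real y)"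
  shows "p = q"
  by (rule poly_eq_on_infinite[OF infinite_real_image[of "-1" 1]]) (use assms in auto)

lemma coeff_pcompose_lin: "coeff (pcompose p [:0,c:]) i = c^i * coeff p i"
  for p :: "complex poly"
proof (induction p arbitrary: i)
  case 0 then show ?case by simp
next
  case (pCons a p)
  have e: "[:0,c:] * r = pCons 0 (smult c r)" for r :: "complex poly"
    by (simp add: mult_pCons_left)
  show ?case
    by (cases i) (simp_all add: pcompose_pCons e coeff_pCons pCons.IH)
qed

lemma poly_neg_pcompose: "poly (pcompose p [:0,-1:]) z = poly p (-z)" for p :: "complex poly"
  by (simp add: poly_pcompose algebra_simps)

lemma even_poly_iff: "even_poly p \<longleftrightarrow> (\<forall>z. poly p (-z) = poly p z)"
proof
  assume "even_poly p"
  then have "pcompose p [:0,-1:] = p"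
  proof (intro poly_eqI)
    fix n show "coeff (pcompose p [:0,-1:]) n = coeff p n"
      using \<open>even_poly p\<close> by (cases "even n") (auto simp: coeff_pcompose_lin even_poly_def)
  qed
  then show "\<forall>z. poly p (-z) = poly p z" by (metis poly_neg_pcompose)
next
  assume "\<forall>z. poly p (-z) = poly p z"
  then have "pcompose p [:0,-1:] = p" by (intro poly_eqI_all) (simp add: poly_neg_pcompose)
  then have "(-1)^j * coeff p j = coeff p j" for j by (metis coeff_pcompose_lin)
  then show "even_poly p" unfolding even_poly_def
  proof (intro allI impI)
    fix j :: nat assume h: "\<And>j. (-1)^j * coeff p j = coeff p j" and "odd j"
    then have "- coeff p j = coeff p j" using h[of j] by simp
    then show "coeff p j = 0" by simp
  qed
qed

lemma odd_poly_iff: "odd_poly p \<longleftrightarrow> (\<forall>z. poly p (-z) = - poly p z)"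
proof
  assume "odd_poly p"
  then have "pcompose p [:0,-1:] = -p"
  proof (intro poly_eqI)
    fix n show "coeff (pcompose p [:0,-1:]) n = coeff (-p) n"
      using \<open>odd_poly p\<close> by (cases "even n") (auto simp: coeff_pcompose_lin odd_poly_def)
  qed
  then show "\<forall>z. poly p (-z) = - poly p z" by (metis poly_neg_pcompose poly_minus)
next
  assume "\<forall>z. poly p (-z) = - poly p z"
  then have "pcompose p [:0,-1:] = -p" by (intro poly_eqI_all) (simp add: poly_neg_pcompose)
  then have h: "(-1)^j * coeff p j = - coeff p j" for j by (metis coeff_pcompose_lin coeff_minus)
  show "odd_poly p" unfolding odd_poly_def
  proof (intro allI impI)
    fix j :: nat assume "even j"
    then have "coeff p j = - coeff p j" using h[of j] by simp
    then show "coeff p j = 0" by simp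
  qed
qed

lemma poly_split_x2:
  "\<exists>R S. p = pcompose R [:0,0,1:] + [:0,1:] * pcompose S [:0,0,1:]" for p :: "complex poly"
proof (induction p)
  case 0 then show ?case by (intro exI[of _ 0]) simp
next
  case (pCons a p)
  then obtain R S where p: "p = pcompose R [:0,0,1:] + [:0,1:] * pcompose S [:0,0,1:]" by blast
  have "pCons a p = pcompose (pCons a S) [:0,0,1:] + [:0,1:] * pcompose R [:0,0,1:]"
    by (rule poly_eqI_all) (simp add: p poly_pcompose algebra_simps power2_eq_square)
  then show ?case by blast
qed

lemma even_decomp:
  fixes p :: "complex poly"
  assumes "\<And>z. poly p (-z) = poly p z"
  shows "\<exists>R. p = pcompose R [:0,0,1:]"
proof -
  obtain R S where p: "p = pcompose R [:0,0,1:] + [:0,1:] * pcompose S [:0,0,1:]"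
    using poly_split_x2 by blast
  have "poly ([:0,1:] * pcompose S [:0,0,1:]) z = poly 0 z" for z
    using assms[of z] by (simp add: p poly_pcompose)
  then have "[:0,1:] * pcompose S [:0,0,1:] = 0" by (rule poly_eqI_all)
  then show ?thesis using p by auto
qed

lemma odd_decomp:
  fixes p :: "complex poly"
  assumes "\<And>z. poly p (-z) = - poly p z"
  shows "\<exists>S. p = [:0,1:] * pcompose S [:0,0,1:]"
proof -
  obtain R S where p: "p = pcompose R [:0,0,1:] + [:0,1:] * pcompose S [:0,0,1:]"
    using poly_split_x2 by blast
  have "poly (pcompose R [:0,0,1:]) z = poly 0 z" for z
    using assms[of z] by (simp add: p poly_pcompose)
  then have "pcompose R [:0,0,1:] = 0" by (rule poly_eqI_all)
  then show ?thesis using p by auto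
qed

lemma poly_closed_ext:
  fixes B :: "complex poly" and E :: "real set"
  assumes "closed S" "finite E" "\<And>y::real. y \<notin> E \<Longrightarrow> poly B (of_real y) \<in> S"
  shows "poly B (of_real y) \<in> S"
proof (rule Lim_in_closed_set[OF assms(1)])
  show "eventually (\<lambda>t. poly B (of_real t) \<in> S) (at y)"
  proof -
    have "eventually (\<lambda>t. \<forall>e\<in>E. t \<noteq> e) (at y)"
      by (intro eventually_ball_finite assms(2) ballI eventually_neq_at_within)
    then show ?thesis by eventually_elim (use assms(3) in blast)
  qed
  show "at y \<noteq> bot" by simp
  have "isCont (\<lambda>t. poly B (of_real t)) y" by (intro continuous_intros)
  then show "((\<lambda>t. poly B (of_real t)) \<longlongrightarrow> poly B (of_real y)) (at y)"
    by (simp add: isCont_def)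
qed

definition S0 :: "complex set" where "S0 = {z. Im z = 0 \<and> 0 \<le> Re z}"

lemma closed_S0: "closed S0"
  unfolding S0_def
  by (intro closed_Collect_conj closed_Collect_eq closed_Collect_le) (auto intro: continuous_intros)

definition S1 :: "complex set" where "S1 = {z. Im z = 0 \<and> Re z \<le> 0}"

lemma closed_S1: "closed S1"
  unfolding S1_def
  by (intro closed_Collect_conj closed_Collect_eq closed_Collect_le) (auto intro: continuous_intros)

lemma poly_closed_within:
  fixes B :: "complex poly"
  assumes "closed S" "at y within U \<noteq> bot"
    "eventually (\<lambda>t. poly B (of_real t) \<in> S) (at y within U)"
  shows "poly B (of_real y) \<in> S"
proof (rule Lim_in_closed_set[OF assms(1,3,2)])
  have "isCont (\<lambda>t. poly B (of_real t)) y" by (intro continuous_intros)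
  then have "((\<lambda>t. poly B (of_real t)) \<longlongrightarrow> poly B (of_real y)) (at y)"
    by (simp add: isCont_def)
  then show "((\<lambda>t. poly B (of_real t)) \<longlongrightarrow> poly B (of_real y)) (at y within U)"
    by (rule tendsto_mono[OF at_le[OF subset_UNIV]])
qed

lemma realpos_pstar:
  fixes C :: "complex poly"
  assumes "\<And>y::real. poly C (of_real y) \<in> S0"
  shows "pstar C = C"
proof (rule poly_eq_on_reals)
  fix y :: real
  have "Im (poly C (of_real y)) = 0" using assms[of y] by (simp add: S0_def)
  then show "poly (pstar C) (of_real y) = poly C (of_real y)"
    by (simp add: complex_eq_iff)
qed

lemma fejer_riesz:
  fixes C :: "complex poly"
  assumes "\<And>y::real. poly C (of_real y) \<in> S0"
  shows "\<exists>R. C = R * pstar R"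
  using assms
proof (induction "degree C" arbitrary: C rule: less_induct)
  case less
  show ?case
  proof (cases "degree C = 0")
    case True
    then obtain c where C: "C = [:c:]" by (metis degree_eq_zeroE)
    have c: "Im c = 0" "0 \<le> Re c" using less.prems[of 0] by (auto simp: C S0_def)
    define R where "R = [:complex_of_real (sqrt (Re c)):]"
    have "C = R * pstar R"
      by (rule poly_eqI_all) (simp add: C R_def c complex_eq_iff)
    then show ?thesis by blast
  next
    case False
    then have Cnz: "C \<noteq> 0" by auto
    obtain a where a: "poly C a = 0"
      using fundamental_theorem_of_algebra_alt[of C] False by fastforce
    have Cstar: "pstar C = C" using less.prems by (rule realpos_pstar)
    define L where "L = [:-a,1:]"
    obtain C1 where C1: "C = L * C1" using a unfolding L_def by (metis poly_eq_0_iff_dvd dvdE)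
    show ?thesis
    proof (cases "Im a = 0")
      case False
      have "poly C (cnj a) = 0"
        by (metis Cstar a complex_cnj_cnj complex_cnj_zero pstar_poly)
      moreover have "cnj a \<noteq> a" using False by (metis Reals_cnj_iff complex_is_Real_iff)
      ultimately have "poly C1 (cnj a) = 0" by (simp add: C1 L_def)
      then obtain C2 where C2: "C1 = pstar L * C2"
        unfolding L_def by (metis poly_eq_0_iff_dvd dvdE pstar_lin complex_cnj_minus)
      have CC: "C = L * pstar L * C2" using C1 C2 by (simp add: ac_simps)
      have C2nz: "C2 \<noteq> 0" using CC Cnz by auto
      have Lnz: "L \<noteq> 0" by (simp add: L_def)
      have degL: "degree L = 1" by (simp add: L_def)
      have "degree C = degree L + degree (pstar L) + degree C2"
        using CC Lnz C2nz by (simp add: degree_mult_eq)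
      then have dlt: "degree C2 < degree C" using degL by simp
      have "poly C2 (of_real y) \<in> S0" for y :: real
      proof -
        define n where "n = (cmod (poly L (of_real y)))\<^sup>2"
        have "poly L (of_real y) \<noteq> 0"
        proof
          assume "poly L (of_real y) = 0"
          then have "a = of_real y" by (simp add: L_def)
          then show False using False by simp
        qed
        then have npos: "n > 0" by (simp add: n_def)
        have "poly C (of_real y) = of_real n * poly C2 (of_real y)"
          using complex_norm_square[of "poly L (of_real y)"] by (simp add: CC n_def)
        then have "poly C2 (of_real y) = poly C (of_real y) / of_real n" using npos by simp
        then show ?thesis using less.prems[of y] npos by (simp add: S0_def)
      qed
      then obtain R2 where R2: "C2 = R2 * pstar R2" using less.hyps[OF dlt] by blast
      have "C = (L * R2) * pstar (L * R2)" by (simp add: CC R2 ac_simps)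
      then show ?thesis by blast
    next
      case True
      define r where "r = Re a"
      have ar: "a = of_real r" using True by (simp add: r_def complex_eq_iff)
      have polyL: "poly L (of_real t) = of_real (t - r)" for t by (simp add: L_def ar)
      have c1r: "poly C1 (of_real t) = poly C (of_real t) / of_real (t - r)" if "t \<noteq> r" for t
        using that by (simp add: C1 polyL)
      have "poly C1 (of_real r) \<in> S0"
      proof (rule poly_closed_within[OF closed_S0, of _ "{r<..}"])
        show "at r within {r<..} \<noteq> bot" by simp
        show "eventually (\<lambda>t. poly C1 (of_real t) \<in> S0) (at r within {r<..})"
          unfolding eventually_at_filter
          by (rule always_eventually) (use less.prems in \<open>auto simp: c1r S0_def\<close>)
      qed
      moreover have "poly C1 (of_real r) \<in> S1"
      proof (rule poly_closed_within[OF closed_S1, of _ "{..<r}"])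
        show "at r within {..<r} \<noteq> bot" by simp
        show "eventually (\<lambda>t. poly C1 (of_real t) \<in> S1) (at r within {..<r})"
          unfolding eventually_at_filter
        proof (rule always_eventually, intro allI impI)
          fix t assume "t \<noteq> r" "t \<in> {..<r}"
          then show "poly C1 (of_real t) \<in> S1"
            using less.prems[of t] by (auto simp: c1r S0_def S1_def divide_nonneg_neg)
        qed
      qed
      ultimately have "poly C1 a = 0" by (simp add: S0_def S1_def ar complex_eq_iff)
      then obtain C2 where C2: "C1 = L * C2" unfolding L_def by (metis poly_eq_0_iff_dvd dvdE)
      have Lstar: "pstar L = L" by (simp add: L_def pstar_lin ar)
      have CC: "C = L * pstar L * C2" using C1 C2 Lstar by (simp add: ac_simps)
      have C2nz: "C2 \<noteq> 0" using CC Cnz by auto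
      have Lnz: "L \<noteq> 0" by (simp add: L_def)
      have degL: "degree L = 1" by (simp add: L_def)
      have "degree C = degree L + degree (pstar L) + degree C2"
        using CC Lnz C2nz by (simp add: degree_mult_eq)
      then have dlt: "degree C2 < degree C" using degL by simp
      have "poly C2 (of_real y) \<in> S0" for y :: real
      proof (rule poly_closed_ext[OF closed_S0, of "{r}"])
        fix t :: real assume "t \<notin> {r}"
        then have tr: "t \<noteq> r" by simp
        have "poly C (of_real t) = of_real ((t - r)^2) * poly C2 (of_real t)"
          by (simp add: CC Lstar polyL power2_eq_square)
        then have "poly C2 (of_real t) = poly C (of_real t) / of_real ((t-r)^2)" using tr by simp
        then show "poly C2 (of_real t) \<in> S0" using less.prems[of t] tr by (simp add: S0_def)
      qed simp
      then obtain R2 where R2: "C2 = R2 * pstar R2" using less.hyps[OF dlt] by blast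
      have "C = (L * R2) * pstar (L * R2)" by (simp add: CC R2 ac_simps)
      then show ?thesis by blast
    qed
  qed
qed

lemma sqrt_even:
  fixes G :: "complex poly"
  assumes ev: "\<And>z. poly G (-z) = poly G z"
    and re: "\<And>y::real. poly G (of_real y) \<in> S0"
    and im: "\<And>t::real. poly G (\<i> * of_real t) \<in> S0"
  shows "\<exists>S. (\<forall>z. poly S (-z) = poly S z) \<and> G = S * pstar S"
proof -
  obtain C where C: "G = pcompose C [:0,0,1:]" using even_decomp ev by blast
  have "poly C (of_real y) \<in> S0" for y :: real
  proof (cases "y \<ge> 0")
    case True
    have "poly C (of_real y) = poly G (of_real (sqrt y))"
      using True by (simp add: C poly_pcompose power2_eq_square flip: of_real_mult)
    then show ?thesis using re by simp
  next
    case False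
    have "(\<i> * of_real (sqrt (-y)))^2 = (of_real y :: complex)"
      using False by (simp add: power_mult_distrib flip: of_real_power)
    then have "poly C (of_real y) = poly G (\<i> * of_real (sqrt (-y)))"
      by (simp add: C poly_pcompose power2_eq_square)
    then show ?thesis using im by simp
  qed
  then obtain R where R: "C = R * pstar R" using fejer_riesz by blast
  define S where "S = pcompose R [:0,0,1:]"
  have "G = S * pstar S"
    by (simp add: C R S_def pstar_pcompose_x2 pcompose_mult)
  moreover have "\<forall>z. poly S (-z) = poly S z" by (simp add: S_def poly_pcompose)
  ultimately show ?thesis by blast
qed

lemma sqrt_odd:
  fixes G :: "complex poly"
  assumes ev: "\<And>z. poly G (-z) = poly G z"
    and re: "\<And>y::real. poly G (of_real y) \<in> S0"
    and im: "\<And>t::real. poly G (\<i> * of_real t) \<in> S1"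
  shows "\<exists>S. (\<forall>z. poly S (-z) = - poly S z) \<and> G = S * pstar S"
proof -
  obtain C where C: "G = pcompose C [:0,0,1:]" using even_decomp ev by blast
  have "poly G 0 \<in> S0" "poly G 0 \<in> S1" using re[of 0] im[of 0] by simp_all
  then have "poly C 0 = 0" by (simp add: C poly_pcompose S0_def S1_def complex_eq_iff)
  then obtain D where D: "C = [:0,1:] * D" by (metis poly_eq_0_iff_dvd dvdE minus_zero)
  have "poly D (of_real y) \<in> S0" for y :: real
  proof (rule poly_closed_ext[OF closed_S0, of "{0}"])
    fix y :: real assume "y \<notin> {0}"
    then have y0: "y \<noteq> 0" by simp
    have Dy: "poly D (of_real y) = poly C (of_real y) / of_real y" using y0 by (simp add: D)
    show "poly D (of_real y) \<in> S0"
    proof (cases "y > 0")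
      case True
      have "poly C (of_real y) = poly G (of_real (sqrt y))"
        using True by (simp add: C poly_pcompose power2_eq_square flip: of_real_mult)
      then show ?thesis using re[of "sqrt y"] True by (simp add: Dy S0_def)
    next
      case False
      have "(\<i> * of_real (sqrt (-y)))^2 = (of_real y :: complex)"
        using False y0 by (simp add: power_mult_distrib flip: of_real_power)
      then have "poly C (of_real y) = poly G (\<i> * of_real (sqrt (-y)))"
        by (simp add: C poly_pcompose power2_eq_square)
      then show ?thesis using im[of "sqrt (-y)"] False y0
        by (simp add: Dy S0_def S1_def divide_nonpos_neg)
    qed
  qed simp
  then obtain R where R: "D = R * pstar R" using fejer_riesz by blast
  define S where "S = [:0,1:] * pcompose R [:0,0,1:]"
  have "G = S * pstar S"
    by (rule poly_eqI_all) (simp add: C D R S_def poly_pcompose power2_eq_square)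
  moreover have "\<forall>z. poly S (-z) = - poly S z" by (simp add: S_def poly_pcompose)
  ultimately show ?thesis by blast
qed


lemma par1: "has_parity P (int k mod 2) \<longleftrightarrow> (even k \<and> even_poly P) \<or> (odd k \<and> odd_poly P)"
proof (cases "even k")
  case True
  then have m: "int k mod 2 = 0" by (metis even_iff_mod_2_eq_zero even_of_nat)
  show ?thesis unfolding has_parity_def m using True by simp
next
  case False
  then have m: "int k mod 2 = 1" by (metis odd_iff_mod_2_eq_one even_of_nat)
  show ?thesis unfolding has_parity_def m using False by simp
qed

lemma par2: "has_parity Q ((int k - 1) mod 2) \<longleftrightarrow> (odd k \<and> even_poly Q) \<or> (even k \<and> odd_poly Q)"
proof (cases "even k")
  case True
  then have "odd (int k - 1)" by simp
  then have m: "(int k - 1) mod 2 = 1" by (metis odd_iff_mod_2_eq_one)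
  show ?thesis unfolding has_parity_def m using True by simp
next
  case False
  then have "even (int k - 1)" by simp
  then have m: "(int k - 1) mod 2 = 0" by (metis even_iff_mod_2_eq_zero)
  show ?thesis unfolding has_parity_def m using False by simp
qed

lemma poly_M [simp]: "poly [:1,0,-1:] z = 1 - z^2" for z :: complex
  by (simp add: power2_eq_square)

lemma real_sq: "poly P (of_real x) * poly (pstar P) (of_real x) = of_real ((cmod (poly P (of_real x)))^2)"
  using complex_norm_square[of "poly P (of_real x)"] by simp

lemma even_imag:
  assumes "\<And>z. poly P (-z) = poly P z"
  shows "poly P (\<i> * of_real t) * poly (pstar P) (\<i> * of_real t) = of_real ((cmod (poly P (\<i> * of_real t)))^2)"
proof -
  have "cnj (\<i> * complex_of_real t) = - (\<i> * of_real t)" by simp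
  then show ?thesis using assms complex_norm_square[of "poly P (\<i> * of_real t)"] by simp
qed

lemma odd_imag:
  assumes "\<And>z. poly P (-z) = - poly P z"
  shows "poly P (\<i> * of_real t) * poly (pstar P) (\<i> * of_real t) = - of_real ((cmod (poly P (\<i> * of_real t)))^2)"
proof -
  have "cnj (\<i> * complex_of_real t) = - (\<i> * of_real t)" by simp
  then show ?thesis using assms complex_norm_square[of "poly P (\<i> * of_real t)"] by simp
qed

lemma id_real:
  assumes "P * pstar P + [:1,0,-1:] * (Q * pstar Q) = 1"
  shows "(cmod (poly P (of_real x)))^2 + (1 - x^2) * (cmod (poly Q (of_real x)))^2 = 1"
proof -
  have "poly (P * pstar P + [:1,0,-1:] * (Q * pstar Q)) (of_real x) = 1" using assms by simp
  then have "of_real ((cmod (poly P (of_real x)))^2 + (1 - x^2) * (cmod (poly Q (of_real x)))^2) = (1::complex)"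
    by (simp only: poly_add poly_mult mult.assoc real_sq poly_M) simp
  then show ?thesis by (metis of_real_eq_1_iff)
qed

lemma id_imag:
  assumes "P * pstar P + [:1,0,-1:] * (Q * pstar Q) = 1"
  shows "poly P (\<i> * of_real t) * poly (pstar P) (\<i> * of_real t)
     + of_real (1 + t^2) * (poly Q (\<i> * of_real t) * poly (pstar Q) (\<i> * of_real t)) = 1"
proof -
  have "poly (P * pstar P + [:1,0,-1:] * (Q * pstar Q)) (\<i> * of_real t) = 1" using assms by simp
  moreover have "(1::complex) - (\<i> * of_real t)^2 = of_real (1 + t^2)" by (simp add: power_mult_distrib)
  ultimately show ?thesis by (simp only: poly_add poly_mult mult.assoc poly_M)
qed

lemma qsp_identity:
  assumes "\<And>x::real. -1 \<le> x \<and> x \<le> 1 \<longrightarrow>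
        (cmod (poly P (of_real x)))^2 + (1 - x^2) * (cmod (poly Q (of_real x)))^2 = 1"
  shows "P * pstar P + [:1,0,-1:] * (Q * pstar Q) = 1"
proof (rule poly_eq_on_reals)
  fix y :: real assume "-1 \<le> y" "y \<le> 1"
  then have "(cmod (poly P (of_real y)))^2 + (1 - y^2) * (cmod (poly Q (of_real y)))^2 = 1"
    using assms by blast
  then have "of_real ((cmod (poly P (of_real y)))^2 + (1 - y^2) * (cmod (poly Q (of_real y)))^2) = (1::complex)"
    by simp
  then show "poly (P * pstar P + [:1,0,-1:] * (Q * pstar Q)) (of_real y) = poly 1 (of_real y)"
    by (simp only: poly_add poly_mult mult.assoc real_sq poly_M) simp
qed

lemma sq_le1: "a^2 \<le> 1 \<Longrightarrow> 0 \<le> a \<Longrightarrow> a \<le> (1::real)"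
  by (simp add: power_le_one_iff)

lemma sq_ge1: "a^2 \<ge> 1 \<Longrightarrow> 0 \<le> a \<Longrightarrow> a \<ge> (1::real)"
  by (metis not_le power_less_one_iff zero_less_numeral not_numeral_le_zero)


lemma x2_le1: "-1 \<le> x \<Longrightarrow> x \<le> 1 \<Longrightarrow> x^2 \<le> (1::real)"
  by (simp add: abs_square_le_1)

lemma x2_ge1: "x \<le> -1 \<or> 1 \<le> x \<Longrightarrow> x^2 \<ge> (1::real)"
proof -
  assume "x \<le> -1 \<or> 1 \<le> x"
  then have a: "1 \<le> \<bar>x\<bar>" by auto
  have "1 \<le> \<bar>x\<bar>^2" using a by (rule one_le_power)
  then show ?thesis by simp
qed

lemma aux_lin: "a + c * b = (1::complex) \<Longrightarrow> b = - d \<Longrightarrow> a = 1 + c * d"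
  by (simp add: algebra_simps eq_diff_eq')

lemma aux_lin2: "a + c * b = (1::complex) \<Longrightarrow> a = - d \<Longrightarrow> c * b = 1 + d"
  by (simp add: algebra_simps eq_diff_eq')

lemma a_fwd:
  assumes "qsp_conds k P Q"
  shows "(\<forall>x::real. -1 \<le> x \<and> x \<le> 1 \<longrightarrow> cmod (poly P (of_real x)) \<le> 1) \<and>
         (\<forall>x::real. (x \<le> -1 \<or> 1 \<le> x) \<longrightarrow> cmod (poly P (of_real x)) \<ge> 1) \<and>
         (even k \<longrightarrow> (\<forall>x::real.
                 poly P (\<i> * of_real x) * poly (pstar P) (\<i> * of_real x) \<in> \<real> \<and>
                 Re (poly P (\<i> * of_real x) * poly (pstar P) (\<i> * of_real x)) \<ge> 1))"
proof (intro conjI allI impI)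
  have Id: "P * pstar P + [:1,0,-1:] * (Q * pstar Q) = 1"
    using assms unfolding qsp_conds_def by (intro qsp_identity) blast
  fix x :: real
  {
    assume "-1 \<le> x \<and> x \<le> 1"
    then have "0 \<le> 1 - x^2" using x2_le1 by simp
    then have "0 \<le> (1 - x^2) * (cmod (poly Q (of_real x)))^2" by simp
    then have "(cmod (poly P (of_real x)))^2 \<le> 1" using id_real[OF Id, of x] by linarith
    then show "cmod (poly P (of_real x)) \<le> 1" using sq_le1[of "cmod (poly P (of_real x))"] by simp
  }
  {
    assume "x \<le> -1 \<or> 1 \<le> x"
    then have "1 - x^2 \<le> 0" using x2_ge1 by simp
    then have "(1 - x^2) * (cmod (poly Q (of_real x)))^2 \<le> 0" by (simp add: mult_nonpos_nonneg)
    then have "(cmod (poly P (of_real x)))^2 \<ge> 1" using id_real[OF Id, of x] by linarith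
    then show "cmod (poly P (of_real x)) \<ge> 1" using sq_ge1[of "cmod (poly P (of_real x))"] by simp
  }
  {
    assume k: "even k"
    then have "odd_poly Q" using assms unfolding qsp_conds_def par2 by auto
    then have Qo: "\<And>z. poly Q (-z) = - poly Q z" by (simp add: odd_poly_iff)
    have e: "poly P (\<i> * of_real x) * poly (pstar P) (\<i> * of_real x)
        = 1 + of_real (1 + x^2) * of_real ((cmod (poly Q (\<i> * of_real x)))^2)"
      by (rule aux_lin[OF id_imag[OF Id, of x] odd_imag[OF Qo, of x]])
    show "poly P (\<i> * of_real x) * poly (pstar P) (\<i> * of_real x) \<in> \<real>"
      unfolding e by (simp del: of_real_power of_real_add)
    show "Re (poly P (\<i> * of_real x) * poly (pstar P) (\<i> * of_real x)) \<ge> 1"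
      unfolding e by (simp del: of_real_power of_real_add)
  }
qed

lemma b_fwd:
  assumes "qsp_conds k P Q"
  shows "(\<forall>x::real. -1 \<le> x \<and> x \<le> 1 \<longrightarrow> sqrt (1 - x^2) * cmod (poly Q (of_real x)) \<le> 1) \<and>
             (odd k \<longrightarrow> (\<forall>x::real.
                 complex_of_real (1 + x^2) * poly Q (\<i> * of_real x) * poly (pstar Q) (\<i> * of_real x) \<in> \<real> \<and>
                 Re (complex_of_real (1 + x^2) * poly Q (\<i> * of_real x) * poly (pstar Q) (\<i> * of_real x)) \<ge> 1))"
proof (intro conjI allI impI)
  have Id: "P * pstar P + [:1,0,-1:] * (Q * pstar Q) = 1"
    using assms unfolding qsp_conds_def by (intro qsp_identity) blast
  fix x :: real
  {
    assume "-1 \<le> x \<and> x \<le> 1"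
    then have h: "0 \<le> 1 - x^2" using x2_le1 by simp
    have "(sqrt (1 - x^2) * cmod (poly Q (of_real x)))^2 = (1 - x^2) * (cmod (poly Q (of_real x)))^2"
      using h by (simp add: power_mult_distrib)
    also have "\<dots> \<le> 1"
    proof -
      have "0 \<le> (cmod (poly P (of_real x)))^2" by simp
      then show ?thesis using id_real[OF Id, of x] by linarith
    qed
    finally have "(sqrt (1 - x^2) * cmod (poly Q (of_real x)))^2 \<le> 1" .
    then show "sqrt (1 - x^2) * cmod (poly Q (of_real x)) \<le> 1"
      using sq_le1[of "sqrt (1 - x^2) * cmod (poly Q (of_real x))"] h by simp
  }
  {
    assume k: "odd k"
    then have "odd_poly P" using assms unfolding qsp_conds_def par1 by auto
    then have Po: "\<And>z. poly P (-z) = - poly P z" by (simp add: odd_poly_iff)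
    have e: "complex_of_real (1 + x^2) * poly Q (\<i> * of_real x) * poly (pstar Q) (\<i> * of_real x)
        = 1 + of_real ((cmod (poly P (\<i> * of_real x)))^2)"
      unfolding mult.assoc by (rule aux_lin2[OF id_imag[OF Id, of x] odd_imag[OF Po, of x]])
    show "complex_of_real (1 + x^2) * poly Q (\<i> * of_real x) * poly (pstar Q) (\<i> * of_real x) \<in> \<real>"
      unfolding e by (simp del: of_real_power of_real_add)
    show "Re (complex_of_real (1 + x^2) * poly Q (\<i> * of_real x) * poly (pstar Q) (\<i> * of_real x)) \<ge> 1"
      unfolding e by (simp del: of_real_power of_real_add)
  }
qed

lemma poly_i2: "(1::complex) - (\<i> * of_real t)^2 = of_real (1 + t^2)"
  by (simp add: power_mult_distrib)

lemma cnj_neg_i: "cnj (- z) = - cnj z" by simp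

lemma sq_nonneg_le: "0 \<le> a \<Longrightarrow> a \<le> 1 \<Longrightarrow> a^2 \<le> (1::real)"
  by (simp add: power_le_one)

lemma a_bwd:
  assumes dP: "deg_le P (int k)" and pP: "has_parity P (int k mod 2)"
    and iva: "\<forall>x::real. -1 \<le> x \<and> x \<le> 1 \<longrightarrow> cmod (poly P (of_real x)) \<le> 1"
    and ivb: "\<forall>x::real. (x \<le> -1 \<or> 1 \<le> x) \<longrightarrow> cmod (poly P (of_real x)) \<ge> 1"
    and ivc: "even k \<longrightarrow> (\<forall>x::real.
                 poly P (\<i> * of_real x) * poly (pstar P) (\<i> * of_real x) \<in> \<real> \<and>
                 Re (poly P (\<i> * of_real x) * poly (pstar P) (\<i> * of_real x)) \<ge> 1)"
  shows "\<exists>Q. qsp_conds k P Q"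
proof -
  have pP': "(even k \<and> even_poly P) \<or> (odd k \<and> odd_poly P)" using pP unfolding par1 .
  define F where "F = 1 - P * pstar P"
  have Freal: "poly F (of_real y) = of_real (1 - (cmod (poly P (of_real y)))^2)" for y
    unfolding F_def using real_sq[of P y] by (simp only: poly_diff poly_mult poly_1) simp
  have "cmod (poly P (of_real 1)) \<le> 1" by (rule iva[rule_format]) simp
  moreover have "cmod (poly P (of_real 1)) \<ge> 1" by (rule ivb[rule_format]) simp
  ultimately have "cmod (poly P (of_real 1)) = 1" by (rule antisym)
  then have "poly F (of_real 1) = 0" by (simp only: Freal) simp
  then have "poly F 1 = 0" by simp
  then obtain F1 where F1: "F = [:-1,1:] * F1" by (metis poly_eq_0_iff_dvd dvdE)
  have "cmod (poly P (of_real (-1))) \<le> 1" by (rule iva[rule_format]) simp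
  moreover have "cmod (poly P (of_real (-1))) \<ge> 1" by (rule ivb[rule_format]) simp
  ultimately have "cmod (poly P (of_real (-1))) = 1" by (rule antisym)
  then have "poly F (of_real (-1)) = 0" by (simp only: Freal) simp
  then have "poly F (-1) = 0" by simp
  then have "poly F1 (-1) = 0" by (simp add: F1)
  then obtain F2 where F2: "F1 = [:1,1:] * F2" by (metis poly_eq_0_iff_dvd dvdE minus_minus)
  define B where "B = - F2"
  have FB: "F = [:1,0,-1:] * B"
    by (rule poly_eqI_all) (simp add: F1 F2 B_def algebra_simps power2_eq_square)
  have Bnz_or: "B = 0 \<or> degree F = 2 + degree B"
  proof (cases "B = 0")
    case False
    have "degree ([:1,0,-1:] * B) = 2 + degree B"
      by (subst degree_mult_eq) (simp_all add: False)
    then show ?thesis unfolding FB by simp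
  qed simp
  have Fev: "poly F (-z) = poly F z" for z
  proof (cases "even k")
    case True
    then have "even_poly P" using pP' by auto
    then have "\<And>z. poly P (-z) = poly P z" by (simp add: even_poly_iff)
    then show ?thesis by (simp add: F_def)
  next
    case False
    then have "odd_poly P" using pP' by auto
    then have "\<And>z. poly P (-z) = - poly P z" by (simp add: odd_poly_iff)
    then show ?thesis by (simp add: F_def)
  qed
  have Bev: "poly B (-z) = poly B z" for z
  proof -
    have "poly ([:1,0,-1:] * (pcompose B [:0,-1:] - B)) w = poly 0 w" for w
      using Fev[of w] by (simp add: FB poly_neg_pcompose algebra_simps)
    then have "[:1,0,-1:] * (pcompose B [:0,-1:] - B) = 0" by (rule poly_eqI_all)
    moreover have "[:1,0,-1:] \<noteq> (0::complex poly)" by simp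
    ultimately have "pcompose B [:0,-1:] - B = 0" by (metis mult_eq_0_iff)
    then have "pcompose B [:0,-1:] = B" by simp
    then show ?thesis by (metis poly_neg_pcompose)
  qed
  have Bre: "poly B (of_real y) \<in> S0" for y
  proof (rule poly_closed_ext[OF closed_S0, of "{-1, 1}"])
    fix y :: real assume "y \<notin> {-1, 1}"
    then have y: "y \<noteq> -1" "y \<noteq> 1" by auto
    have "1 - y^2 \<noteq> 0"
    proof
      assume "1 - y^2 = 0"
      then have "(y - 1) * (y + 1) = 0" by (simp add: algebra_simps power2_eq_square)
      then show False using y by auto
    qed
    moreover have "(1::complex) - (of_real y)^2 = of_real (1 - y^2)" by simp
    ultimately have nz: "(1::complex) - (of_real y)^2 \<noteq> 0" by (simp only: of_real_eq_0_iff) simp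
    have "poly F (of_real y) = (1 - (of_real y)^2) * poly B (of_real y)" by (simp only: FB poly_mult poly_M)
    then have "poly B (of_real y) = poly F (of_real y) / (1 - (of_real y)^2)" using nz by simp
    also have "\<dots> = of_real ((1 - (cmod (poly P (of_real y)))^2) / (1 - y^2))"
      by (simp add: Freal)
    finally have eq: "poly B (of_real y) = of_real ((1 - (cmod (poly P (of_real y)))^2) / (1 - y^2))" .
    have "0 \<le> (1 - (cmod (poly P (of_real y)))^2) / (1 - y^2)"
    proof (cases "-1 \<le> y \<and> y \<le> 1")
      case True
      then have "cmod (poly P (of_real y)) \<le> 1" using iva by blast
      then have "(cmod (poly P (of_real y)))^2 \<le> 1" by (intro sq_nonneg_le) auto
      moreover have "y^2 \<le> 1" using True x2_le1 by blast
      ultimately show ?thesis by (intro divide_nonneg_nonneg) auto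
    next
      case False
      then have "cmod (poly P (of_real y)) \<ge> 1" by (intro ivb[rule_format]) linarith
      then have "(cmod (poly P (of_real y)))^2 \<ge> 1" by (rule one_le_power)
      moreover have "y^2 \<ge> 1" by (rule x2_ge1) (use False in linarith)
      ultimately show ?thesis by (intro divide_nonpos_nonpos) auto
    qed
    then show "poly B (of_real y) \<in> S0" by (simp add: eq S0_def)
  qed simp
  have pos: "0 < 1 + t^2" for t :: real by (simp add: add_pos_nonneg)
  have Bim: "poly B (\<i> * of_real t) = poly F (\<i> * of_real t) / of_real (1 + t^2)" for t
  proof -
    have "poly F (\<i> * of_real t) = (1 - (\<i> * of_real t)^2) * poly B (\<i> * of_real t)"
      by (simp only: FB poly_mult poly_M)
    then have "poly F (\<i> * of_real t) = of_real (1 + t^2) * poly B (\<i> * of_real t)"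
      by (simp only: poly_i2)
    moreover have "(of_real (1 + t^2) :: complex) \<noteq> 0"
      using pos[of t] by (simp only: of_real_eq_0_iff)
    ultimately show ?thesis by simp
  qed
  obtain Q where Qpar: "has_parity Q ((int k - 1) mod 2)" and BQ: "B = Q * pstar Q"
  proof (cases "even k")
    case True
    have "poly B (\<i> * of_real t) \<in> S1" for t
    proof -
      have "poly P (\<i> * of_real t) * poly (pstar P) (\<i> * of_real t) \<in> \<real>"
        "Re (poly P (\<i> * of_real t) * poly (pstar P) (\<i> * of_real t)) \<ge> 1"
        using ivc True by auto
      then have "poly F (\<i> * of_real t) \<in> S1" by (auto simp: F_def S1_def complex_is_Real_iff)
      then show ?thesis using pos[of t] by (simp add: Bim S1_def divide_nonpos_pos)
    qed
    then obtain S where "\<forall>z. poly S (-z) = - poly S z" "B = S * pstar S"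
      using sqrt_odd[of B] Bev Bre by blast
    moreover have "has_parity S ((int k - 1) mod 2)"
      using calculation(1) True par2 odd_poly_iff by blast
    ultimately show ?thesis using that by blast
  next
    case False
    then have "odd_poly P" using pP' by auto
    then have Po: "\<And>z. poly P (-z) = - poly P z" by (simp add: odd_poly_iff)
    have "poly B (\<i> * of_real t) \<in> S0" for t
    proof -
      have "poly F (\<i> * of_real t) = 1 + of_real ((cmod (poly P (\<i> * of_real t)))^2)"
        unfolding F_def using odd_imag[OF Po, of t] by (simp only: poly_diff poly_mult poly_1) simp
      then have "poly F (\<i> * of_real t) \<in> S0" by (simp add: S0_def)
      then show ?thesis using pos[of t] by (simp add: Bim S0_def)
    qed
    then obtain S where "\<forall>z. poly S (-z) = poly S z" "B = S * pstar S"
      using sqrt_even[of B] Bev Bre by blast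
    moreover have "has_parity S ((int k - 1) mod 2)"
      using calculation(1) False par2 even_poly_iff by blast
    ultimately show ?thesis using that by blast
  qed
  have dPk: "degree P \<le> k" using dP unfolding deg_le_def by auto
  have "degree F \<le> 2 * k"
  proof -
    have "degree F \<le> max (degree (1::complex poly)) (degree (P * pstar P))"
      unfolding F_def by (rule degree_diff_le_max)
    also have "\<dots> \<le> degree P + degree (pstar P)" using degree_mult_le[of P "pstar P"] by simp
    finally show ?thesis using dPk by simp
  qed
  have dQ: "deg_le Q (int k - 1)"
  proof (cases "Q = 0")
    case True then show ?thesis by (simp add: deg_le_def)
  next
    case False
    then have "B \<noteq> 0" using BQ by simp
    then have "degree F = 2 + degree B" using Bnz_or by simp
    moreover have "degree B = degree Q + degree Q" using BQ False by (simp add: degree_mult_eq)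
    ultimately show ?thesis using \<open>degree F \<le> 2 * k\<close> by (simp add: deg_le_def)
  qed
  have Id: "P * pstar P + [:1,0,-1:] * (Q * pstar Q) = 1"
    using FB BQ F_def by (simp add: algebra_simps)
  have "qsp_conds k P Q"
    unfolding qsp_conds_def using dP pP dQ Qpar id_real[OF Id] by blast
  then show ?thesis by blast
qed

lemma b_bwd:
  assumes dQ: "deg_le Q (int k - 1)" and pQ: "has_parity Q ((int k - 1) mod 2)"
    and va: "\<forall>x::real. -1 \<le> x \<and> x \<le> 1 \<longrightarrow> sqrt (1 - x^2) * cmod (poly Q (of_real x)) \<le> 1"
    and vb: "odd k \<longrightarrow> (\<forall>x::real.
                 complex_of_real (1 + x^2) * poly Q (\<i> * of_real x) * poly (pstar Q) (\<i> * of_real x) \<in> \<real> \<and>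
                 Re (complex_of_real (1 + x^2) * poly Q (\<i> * of_real x) * poly (pstar Q) (\<i> * of_real x)) \<ge> 1)"
  shows "\<exists>P. qsp_conds k P Q"
proof -
  have pQ': "(odd k \<and> even_poly Q) \<or> (even k \<and> odd_poly Q)" using pQ unfolding par2 .
  define G where "G = 1 - [:1,0,-1:] * (Q * pstar Q)"
  have Greal: "poly G (of_real y) = of_real (1 - (1 - y^2) * (cmod (poly Q (of_real y)))^2)" for y
  proof -
    have "poly G (of_real y) = 1 - (1 - (of_real y)^2) * (poly Q (of_real y) * poly (pstar Q) (of_real y))"
      unfolding G_def by (simp only: poly_diff poly_mult poly_1 poly_M)
    also have "\<dots> = 1 - (1 - (of_real y)^2) * of_real ((cmod (poly Q (of_real y)))^2)"
      by (simp only: real_sq)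
    finally show ?thesis by simp
  qed
  have Gim: "poly G (\<i> * of_real t) = 1 - of_real (1 + t^2) * (poly Q (\<i> * of_real t) * poly (pstar Q) (\<i> * of_real t))" for t
  proof -
    have "poly G (\<i> * of_real t) = 1 - (1 - (\<i> * of_real t)^2) * (poly Q (\<i> * of_real t) * poly (pstar Q) (\<i> * of_real t))"
      unfolding G_def by (simp only: poly_diff poly_mult poly_1 poly_M)
    then show ?thesis by (simp only: poly_i2)
  qed
  have Gev: "poly G (-z) = poly G z" for z
  proof (cases "even k")
    case True
    then have "odd_poly Q" using pQ' by auto
    then have "\<And>z. poly Q (-z) = - poly Q z" by (simp add: odd_poly_iff)
    then show ?thesis by (simp add: G_def)
  next
    case False
    then have "even_poly Q" using pQ' by auto
    then have "\<And>z. poly Q (-z) = poly Q z" by (simp add: even_poly_iff)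
    then show ?thesis by (simp add: G_def)
  qed
  have Gre: "poly G (of_real y) \<in> S0" for y
  proof -
    have "0 \<le> 1 - (1 - y^2) * (cmod (poly Q (of_real y)))^2"
    proof (cases "-1 \<le> y \<and> y \<le> 1")
      case True
      then have h: "0 \<le> 1 - y^2" using x2_le1 by simp
      have "sqrt (1 - y^2) * cmod (poly Q (of_real y)) \<le> 1" using va True by blast
      moreover have "0 \<le> sqrt (1 - y^2) * cmod (poly Q (of_real y))"
        using h by simp
      ultimately have "(sqrt (1 - y^2) * cmod (poly Q (of_real y)))^2 \<le> 1"
        by (intro sq_nonneg_le)
      then have "(1 - y^2) * (cmod (poly Q (of_real y)))^2 \<le> 1"
        using h by (simp add: power_mult_distrib)
      then show ?thesis by linarith
    next
      case False
      have "y^2 \<ge> 1" by (rule x2_ge1) (use False in linarith)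
      then have "(1 - y^2) * (cmod (poly Q (of_real y)))^2 \<le> 0"
        by (intro mult_nonpos_nonneg) auto
      then show ?thesis by linarith
    qed
    then show ?thesis by (simp only: Greal) (simp add: S0_def)
  qed
  have pos: "0 < 1 + t^2" for t :: real by (simp add: add_pos_nonneg)
  obtain P where Ppar: "has_parity P (int k mod 2)" and GP: "G = P * pstar P"
  proof (cases "even k")
    case True
    then have "odd_poly Q" using pQ' by auto
    then have Qo: "\<And>z. poly Q (-z) = - poly Q z" by (simp add: odd_poly_iff)
    have "poly G (\<i> * of_real t) \<in> S0" for t
    proof -
      have "poly G (\<i> * of_real t) = 1 + of_real (1 + t^2) * of_real ((cmod (poly Q (\<i> * of_real t)))^2)"
        unfolding Gim odd_imag[OF Qo, of t] by simp
      also have "\<dots> = of_real (1 + (1 + t^2) * (cmod (poly Q (\<i> * of_real t)))^2)"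
        by (simp only: of_real_add of_real_mult of_real_1)
      finally show ?thesis using pos[of t] by (simp add: S0_def)
    qed
    then obtain S where "\<forall>z. poly S (-z) = poly S z" "G = S * pstar S"
      using sqrt_even[of G] Gev Gre by blast
    moreover have "has_parity S (int k mod 2)"
      using calculation(1) True par1 even_poly_iff by blast
    ultimately show ?thesis using that by blast
  next
    case False
    have "poly G (\<i> * of_real t) \<in> S1" for t
    proof -
      have "complex_of_real (1 + t^2) * poly Q (\<i> * of_real t) * poly (pstar Q) (\<i> * of_real t) \<in> \<real>"
        "Re (complex_of_real (1 + t^2) * poly Q (\<i> * of_real t) * poly (pstar Q) (\<i> * of_real t)) \<ge> 1"
        using vb False by auto
      then show ?thesis unfolding Gim by (auto simp: S1_def complex_is_Real_iff mult.assoc)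
    qed
    then obtain S where "\<forall>z. poly S (-z) = - poly S z" "G = S * pstar S"
      using sqrt_odd[of G] Gev Gre by blast
    moreover have "has_parity S (int k mod 2)"
      using calculation(1) False par1 odd_poly_iff by blast
    ultimately show ?thesis using that by blast
  qed
  have dG: "degree G \<le> 2 * k"
  proof (cases "Q = 0")
    case True then show ?thesis by (simp add: G_def)
  next
    case False
    have dQk: "int (degree Q) \<le> int k - 1" using dQ False unfolding deg_le_def by auto
    have "degree G \<le> max (degree (1::complex poly)) (degree ([:1,0,-1:] * (Q * pstar Q)))"
      unfolding G_def by (rule degree_diff_le_max)
    also have "degree ([:1,0,-1:] * (Q * pstar Q)) = 2 + (degree Q + degree Q)"
      using False by (subst degree_mult_eq; simp add: degree_mult_eq)
    finally show ?thesis using dQk by simp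
  qed
  have dP: "deg_le P (int k)"
  proof (cases "P = 0")
    case True then show ?thesis by (simp add: deg_le_def)
  next
    case False
    have "degree G = degree P + degree P" using GP False by (simp add: degree_mult_eq)
    then show ?thesis using dG by (simp add: deg_le_def)
  qed
  have Id: "P * pstar P + [:1,0,-1:] * (Q * pstar Q) = 1"
    using GP G_def by (simp add: algebra_simps)
  have "qsp_conds k P Q"
    unfolding qsp_conds_def using dP Ppar dQ pQ id_real[OF Id] by blast
  then show ?thesis by blast
qed

theorem mainTheorem2:
  fixes k :: nat
  shows "(\<forall>P. (\<exists>Q. qsp_conds k P Q) \<longleftrightarrow>
            (deg_le P (int k) \<and> has_parity P (int k mod 2) \<and>
             (\<forall>x::real. -1 \<le> x \<and> x \<le> 1 \<longrightarrow> cmod (poly P (of_real x)) \<le> 1) \<and>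
             (\<forall>x::real. (x \<le> -1 \<or> 1 \<le> x) \<longrightarrow> cmod (poly P (of_real x)) \<ge> 1) \<and>
             (even k \<longrightarrow> (\<forall>x::real.
                 poly P (\<i> * of_real x) * poly (pstar P) (\<i> * of_real x) \<in> \<real> \<and>
                 Re (poly P (\<i> * of_real x) * poly (pstar P) (\<i> * of_real x)) \<ge> 1))))
       \<and>
         (\<forall>Q. (\<exists>P. qsp_conds k P Q) \<longleftrightarrow>
            (deg_le Q (int k - 1) \<and> has_parity Q ((int k - 1) mod 2) \<and>
             (\<forall>x::real. -1 \<le> x \<and> x \<le> 1 \<longrightarrow> sqrt (1 - x^2) * cmod (poly Q (of_real x)) \<le> 1) \<and>
             (odd k \<longrightarrow> (\<forall>x::real.
                 complex_of_real (1 + x^2) * poly Q (\<i> * of_real x) * poly (pstar Q) (\<i> * of_real x) \<in> \<real> \<and>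
                 Re (complex_of_real (1 + x^2) * poly Q (\<i> * of_real x) * poly (pstar Q) (\<i> * of_real x)) \<ge> 1))))"
proof (intro conjI allI; rule iffI)
  fix P assume "\<exists>Q. qsp_conds k P Q"
  then obtain Q where c: "qsp_conds k P Q" by blast
  have "deg_le P (int k)" "has_parity P (int k mod 2)" using c unfolding qsp_conds_def by auto
  then show "deg_le P (int k) \<and> has_parity P (int k mod 2) \<and>
             (\<forall>x::real. -1 \<le> x \<and> x \<le> 1 \<longrightarrow> cmod (poly P (of_real x)) \<le> 1) \<and>
             (\<forall>x::real. (x \<le> -1 \<or> 1 \<le> x) \<longrightarrow> cmod (poly P (of_real x)) \<ge> 1) \<and>
             (even k \<longrightarrow> (\<forall>x::real.
                 poly P (\<i> * of_real x) * poly (pstar P) (\<i> * of_real x) \<in> \<real> \<and>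
                 Re (poly P (\<i> * of_real x) * poly (pstar P) (\<i> * of_real x)) \<ge> 1))"
    using a_fwd[OF c] by blast
next
  fix P assume h: "deg_le P (int k) \<and> has_parity P (int k mod 2) \<and>
             (\<forall>x::real. -1 \<le> x \<and> x \<le> 1 \<longrightarrow> cmod (poly P (of_real x)) \<le> 1) \<and>
             (\<forall>x::real. (x \<le> -1 \<or> 1 \<le> x) \<longrightarrow> cmod (poly P (of_real x)) \<ge> 1) \<and>
             (even k \<longrightarrow> (\<forall>x::real.
                 poly P (\<i> * of_real x) * poly (pstar P) (\<i> * of_real x) \<in> \<real> \<and>
                 Re (poly P (\<i> * of_real x) * poly (pstar P) (\<i> * of_real x)) \<ge> 1))"
  show "\<exists>Q. qsp_conds k P Q" using h by (intro a_bwd) blast+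
next
  fix Q assume "\<exists>P. qsp_conds k P Q"
  then obtain P where c: "qsp_conds k P Q" by blast
  have "deg_le Q (int k - 1)" "has_parity Q ((int k - 1) mod 2)" using c unfolding qsp_conds_def by auto
  then show "deg_le Q (int k - 1) \<and> has_parity Q ((int k - 1) mod 2) \<and>
             (\<forall>x::real. -1 \<le> x \<and> x \<le> 1 \<longrightarrow> sqrt (1 - x^2) * cmod (poly Q (of_real x)) \<le> 1) \<and>
             (odd k \<longrightarrow> (\<forall>x::real.
                 complex_of_real (1 + x^2) * poly Q (\<i> * of_real x) * poly (pstar Q) (\<i> * of_real x) \<in> \<real> \<and>
                 Re (complex_of_real (1 + x^2) * poly Q (\<i> * of_real x) * poly (pstar Q) (\<i> * of_real x)) \<ge> 1))"
    using b_fwd[OF c] by blast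
next
  fix Q assume h: "deg_le Q (int k - 1) \<and> has_parity Q ((int k - 1) mod 2) \<and>
             (\<forall>x::real. -1 \<le> x \<and> x \<le> 1 \<longrightarrow> sqrt (1 - x^2) * cmod (poly Q (of_real x)) \<le> 1) \<and>
             (odd k \<longrightarrow> (\<forall>x::real.
                 complex_of_real (1 + x^2) * poly Q (\<i> * of_real x) * poly (pstar Q) (\<i> * of_real x) \<in> \<real> \<and>
                 Re (complex_of_real (1 + x^2) * poly Q (\<i> * of_real x) * poly (pstar Q) (\<i> * of_real x)) \<ge> 1))"
  show "\<exists>P. qsp_conds k P Q" using h by (intro b_bwd) blast+
qed

end
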